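(* Suppose that $n=m$ and $W=(w_{ij})\in(\mathbb{R}_{>0})^{n\times n}$ is symmetric. (a) The following recursion holds: $$T^{n,n}(W) = R^{n,n}_n \begin{pmatrix} \left[ R^{n,n-1}_n \begin{pmatrix} T^{n-1,n-1}(W_{n-1,n-1}) \\ w_{1n}\ \ldots\ w_{n-1,n} \end{pmatrix} \right]^t \\ w_{1n}\ \ldots\ w_{nn} \end{pmatrix} .$$ Moreover, if $(s_{ij})$ denote the elements of the $(n-1)\times n$ matrix $S=\left[ R^{n,n-1}_n \begin{pmatrix} T^{n-1,n-1}(W_{n-1,n-1})\\ w_{1n}\ \ldots\ w_{n-1,n} \end{pmatrix} \right]^t$ and $(t_{ij})$ the elements of $T^{n,n}(W)$, then $t_{ij}=s_{ij}$ for $1\le i<j\le n$, $t_{11}=s_{12}/(2s_{11})$, $t_{ii}=s_{i,i+1}s_{i-1,i}/s_{ii}$ for $2\le i\le n-1$, and $t_{nn}=2s_{n-1,n}w_{nn}$. (b) For $n\ge 1$, $$4^{\lfloor n/2\rfloor} \prod_{i=1}^n w_{ii} = \frac{\prod_{j=0}^{\lfloor\frac{n-1}2\rfloor} t_{n-2j, \,n-2j}}{\prod_{j=0}^{\lfloor\frac{n-2}2\rfloor} t_{n-1-2j,\, n-1-2j}} = \frac{\prod_{i\ \mathrm{odd}} z_{ni}}{\prod_{i\ \mathrm{even}} z_{ni}},$$ where $z_{ni}=t_{n-i+1,n-i+1}$, $1\le i\le n$.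
   Context: For $n,m\ge1$ and $X=(x_{ij})\in(\mathbb{R}_{>0})^{n\times m}$, define local moves: for $2\le i\le n$, $2\le j\le m$, $l_{ij}$ replaces the submatrix $\begin{pmatrix} x_{i-1,j-1}& x_{i-1,j}\\ x_{i,j-1}& x_{ij}\end{pmatrix}=\begin{pmatrix} a& b\\ c& d\end{pmatrix}$ by $\begin{pmatrix} bc/(ab+ac) & b\\ c& d(b+c) \end{pmatrix}$; $l_{i1}$ replaces $x_{i1}$ by $x_{i-1,1}x_{i1}$; $l_{1j}$ replaces $x_{1j}$ by $x_{1,j-1}x_{1j}$; $l_{11}$ is the identity. Set $\pi^j_i=l_{ij}\circ\cdots\circ l_{i1}$ and $R^{n,m}_i=\pi_1^{m-i+1}\circ\cdots\circ\pi^m_i$ if $i\le m$, $R^{n,m}_i=\pi^1_{i-m+1}\circ\cdots\circ\pi^m_i$ if $i\ge m$ (maps on $(\mathbb{R}_{>0})^{n\times m}$). The geometric RSK map is $T^{n,m}=R^{n,m}_n\circ\cdots\circ R^{n,m}_1$. $W_{k,k}=(w_{ij},1\le i,j\le k)$, and $M^t$ denotes transpose. The $z_{ni}$ are the bottom-row (shape) entries of the pattern $P$ associated with $T^{n,n}(W)$. *)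

theory Defs
  imports Complex_Main
begin

text \<open>Matrices are represented as functions nat => nat => real, with 1-based indices.
  An n x m matrix is given by its entries X i j for 1 <= i <= n, 1 <= j <= m;
  entries outside this range are never read nor written by the local moves
  l_ij with 1 <= i <= n, 1 <= j <= m.\<close>

type_synonym mat = "nat \<Rightarrow> nat \<Rightarrow> real"

definition lmove :: "nat \<Rightarrow> nat \<Rightarrow> mat \<Rightarrow> mat" where
  "lmove i j X =
     (if i = 1 \<and> j = 1 then X
      else if j = 1 then (\<lambda>p q. if p = i \<and> q = 1 then X (i-1) 1 * X i 1 else X p q)
      else if i = 1 then (\<lambda>p q. if p = 1 \<and> q = j then X 1 (j-1) * X 1 j else X p q)
      else (let a = X (i-1) (j-1); b = X (i-1) j; c = X i (j-1); d = X i j in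
            (\<lambda>p q. if p = i-1 \<and> q = j-1 then b * c / (a * b + a * c)
                   else if p = i \<and> q = j then d * (b + c)
                   else X p q)))"

fun pimove :: "nat \<Rightarrow> nat \<Rightarrow> mat \<Rightarrow> mat" where
  "pimove i 0 X = X"
| "pimove i (Suc j) X = lmove i (Suc j) (pimove i j X)"

text \<open>Rmap n m i = R^{n,m}_i: for i <= m it is pi_1^{m-i+1} o ... o pi_i^m,
  for i >= m it is pi_{i-m+1}^1 o ... o pi_i^m; i.e. apply pi_{i-k}^{m-k}
  for k = 0, 1, ..., min i m - 1 in this order.\<close>
definition Rmap :: "nat \<Rightarrow> nat \<Rightarrow> nat \<Rightarrow> mat \<Rightarrow> mat" where
  "Rmap n m i X = fold (\<lambda>k Y. pimove (i - k) (m - k) Y) [0..<min i m] X"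

text \<open>gRSK n m = T^{n,m} = R^{n,m}_n o ... o R^{n,m}_1.\<close>
definition gRSK :: "nat \<Rightarrow> nat \<Rightarrow> mat \<Rightarrow> mat" where
  "gRSK n m X = fold (\<lambda>i Y. Rmap n m i Y) [1..<n+1] X"

definition zshape :: "nat \<Rightarrow> mat \<Rightarrow> nat \<Rightarrow> real" where
  "zshape n W i = gRSK n n W (n - i + 1) (n - i + 1)"

end

theory Submission imports Defs begin

lemma lmove_other:
  assumes "\<not>(p=a \<and> q=b)" "\<not>(p=a-1 \<and> q=b-1)"
  shows "lmove a b X p q = X p q"
  using assms unfolding lmove_def Let_def by auto

lemma lmove_gen1:
  assumes "2 \<le> a" "2 \<le> b"
  shows "lmove a b X (a-1) (b-1) = X (a-1) b * X a (b-1) / (X (a-1) (b-1) * X (a-1) b + X (a-1) (b-1) * X a (b-1))"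
  using assms unfolding lmove_def Let_def by auto

lemma lmove_gen2:
  assumes "2 \<le> a" "2 \<le> b"
  shows "lmove a b X a b = X a b * (X (a-1) b + X a (b-1))"
  using assms unfolding lmove_def Let_def by auto

lemma lmove_col1:
  assumes "2 \<le> a"
  shows "lmove a 1 X a 1 = X (a-1) 1 * X a 1"
  using assms unfolding lmove_def Let_def by auto

lemma lmove_row1:
  assumes "2 \<le> b"
  shows "lmove 1 b X 1 b = X 1 (b-1) * X 1 b"
  using assms unfolding lmove_def Let_def by auto

lemma lmove_11: "lmove 1 1 X = X"
  unfolding lmove_def by auto

lemma lmove_agree:
  assumes "X (a-1) (b-1) = Y (a-1) (b-1)" "X (a-1) b = Y (a-1) b" "X a (b-1) = Y a (b-1)"
    "X a b = Y a b" "X p q = Y p q"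
  shows "lmove a b X p q = lmove a b Y p q"
  using assms unfolding lmove_def Let_def by auto

lemma lmove_comm:
  assumes "1 \<le> a" "1 \<le> b" "1 \<le> a'" "1 \<le> b'"
   and c: "a'+1 < a \<or> a+1 < a' \<or> b'+1<b \<or> b+1<b' \<or> (a'=a+1 \<and> b = b'+1) \<or> (a = a'+1 \<and> b'=b+1)"
  shows "lmove a b (lmove a' b' X) = lmove a' b' (lmove a b X)"
proof (rule ext, rule ext)
  fix p q
  have r1: "lmove a' b' X u v = X u v" if "u \<in> {a-1,a}" "v \<in> {b-1,b}" for u v
    using that assms by (intro lmove_other) auto
  have r2: "lmove a b X u v = X u v" if "u \<in> {a'-1,a'}" "v \<in> {b'-1,b'}" for u v
    using that assms by (intro lmove_other) auto
  show "lmove a b (lmove a' b' X) p q = lmove a' b' (lmove a b X) p q"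
  proof (cases "(p=a \<and> q=b) \<or> (p=a-1 \<and> q=b-1)")
    case True
    have "lmove a b (lmove a' b' X) p q = lmove a b X p q"
      apply (rule lmove_agree) using True by (auto intro!: r1)
    moreover have "lmove a' b' (lmove a b X) p q = lmove a b X p q"
      apply (rule lmove_other) using True assms by auto
    ultimately show ?thesis by simp
  next
    case F: False
    show ?thesis
    proof (cases "(p=a' \<and> q=b') \<or> (p=a'-1 \<and> q=b'-1)")
      case True
      have "lmove a' b' (lmove a b X) p q = lmove a' b' X p q"
        apply (rule lmove_agree) using True by (auto intro!: r2)
      moreover have "lmove a b (lmove a' b' X) p q = lmove a' b' X p q"
        apply (rule lmove_other) using F by auto
      ultimately show ?thesis by simp
    next
      case False
      then show ?thesis using F by (simp add: lmove_other)
    qed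
  qed
qed


lemma commute_fold:
  assumes "\<forall>y\<in>set ys. \<forall>z. f x (f y z) = f y (f x z)"
  shows "f x (fold f ys z) = fold f ys (f x z)"
  using assms by (induction ys arbitrary: z) auto

lemma trace_fold:
  assumes "sorted_wrt R xs" "sorted_wrt Q ys" "set xs = set ys" "distinct xs" "distinct ys"
    "\<And>x y z. x \<in> set xs \<Longrightarrow> y \<in> set xs \<Longrightarrow> x \<noteq> y \<Longrightarrow> R x y \<Longrightarrow> Q y x \<Longrightarrow> f x (f y z) = f y (f x z)"
  shows "fold f xs z = fold f ys z"
  using assms
proof (induction xs arbitrary: ys z)
  case Nil then show ?case by simp
next
  case (Cons x xs)
  have "x \<in> set ys" using Cons.prems by auto
  then obtain ys1 ys2 where ys: "ys = ys1 @ x # ys2" by (meson split_list)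
  have com: "\<forall>y\<in>set ys1. \<forall>z. f x (f y z) = f y (f x z)"
  proof (intro ballI allI)
    fix y z assume y: "y \<in> set ys1"
    have "Q y x" using Cons.prems(2) y ys by (auto simp: sorted_wrt_append)
    moreover have "x \<noteq> y" using Cons.prems(5) y ys by auto
    moreover have "y \<in> set xs" using Cons.prems(3) y ys \<open>x \<noteq> y\<close> by auto
    moreover have "R x y" using Cons.prems(1) \<open>y \<in> set xs\<close> by auto
    ultimately show "f x (f y z) = f y (f x z)" using Cons.prems(6)[of x y] \<open>y \<in> set xs\<close> by auto
  qed
  have "fold f ys z = fold f ys2 (f x (fold f ys1 z))" using ys by simp
  also have "\<dots> = fold f (ys1 @ ys2) (f x z)" using commute_fold[OF com] by simp
  also have "\<dots> = fold f xs (f x z)"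
  proof (rule sym, rule Cons.IH)
    show "sorted_wrt R xs" using Cons.prems(1) by simp
    show "sorted_wrt Q (ys1 @ ys2)" using Cons.prems(2) ys by (auto simp: sorted_wrt_append)
    show "set xs = set (ys1 @ ys2)" using Cons.prems(3-5) ys by auto
    show "distinct xs" "distinct (ys1 @ ys2)" using Cons.prems(4,5) ys by auto
    show "\<And>x y z. x \<in> set xs \<Longrightarrow> y \<in> set xs \<Longrightarrow> x \<noteq> y \<Longrightarrow> R x y \<Longrightarrow> Q y x \<Longrightarrow> f x (f y z) = f y (f x z)"
      using Cons.prems(6) by auto
  qed
  finally show ?case by simp
qed


definition stp :: "nat \<times> nat \<times> nat \<Rightarrow> mat \<Rightarrow> mat" where
  "stp e = lmove (fst e) (fst (snd e))"

definition rword :: "nat \<Rightarrow> nat \<Rightarrow> (nat \<times> nat \<times> nat) list" where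
  "rword q i = concat (map (\<lambda>k. map (\<lambda>b. (i-k, b, k)) [1..<q-k+1]) [0..<min i q])"

definition gword :: "nat \<Rightarrow> nat \<Rightarrow> (nat \<times> nat \<times> nat) list" where
  "gword p q = concat (map (rword q) [1..<p+1])"

lemma fold_concat_map: "fold f (concat (map g xs)) z = fold (\<lambda>x. fold f (g x)) xs z"
  by (induction xs arbitrary: z) auto

lemma pimove_fold: "pimove a j X = fold (lmove a) [1..<j+1] X"
  by (induction j arbitrary: X) auto

lemma pimove_stp: "pimove a j = fold stp (map (\<lambda>b. (a, b, k)) [1..<j+1])"
  by (rule ext) (simp add: pimove_fold fold_map stp_def o_def del: upt_Suc)

lemma Rmap_word: "Rmap n q i = fold stp (rword q i)"
proof -
  have "(\<lambda>k. pimove (i-k) (q-k)) = (\<lambda>k. fold stp (map (\<lambda>b. (i-k,b,k)) [1..<q-k+1]))"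
    by (rule ext) (rule pimove_stp)
  then show ?thesis
    by (intro ext) (simp add: Rmap_def rword_def fold_concat_map del: upt_Suc)
qed

lemma gRSK_word: "gRSK p q = fold stp (gword p q)"
  by (rule ext) (simp add: gRSK_def gword_def fold_concat_map Rmap_word del: upt_Suc)

lemma set_rword: "e \<in> set (rword q i) \<longleftrightarrow> (\<exists>k b. e = (i-k,b,k) \<and> k < min i q \<and> 1 \<le> b \<and> b \<le> q-k)"
  unfolding rword_def by (auto simp: image_iff simp del: upt_Suc)

lemma set_gword: "set (gword p q) = {(a,b,h). 1\<le>a \<and> 1\<le>b \<and> a+h\<le>p \<and> b+h\<le>q}"
proof -
  have "e \<in> set (gword p q) \<longleftrightarrow> e \<in> {(a,b,h). 1\<le>a \<and> 1\<le>b \<and> a+h\<le>p \<and> b+h\<le>q}" for e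
  proof (cases e)
    case (fields a b h)
    show ?thesis
    proof
      assume "e \<in> set (gword p q)"
      then show "e \<in> {(a,b,h). 1\<le>a \<and> 1\<le>b \<and> a+h\<le>p \<and> b+h\<le>q}"
        unfolding gword_def by (auto simp: set_rword fields)
    next
      assume "e \<in> {(a,b,h). 1\<le>a \<and> 1\<le>b \<and> a+h\<le>p \<and> b+h\<le>q}"
      then have h: "1\<le>a" "1\<le>b" "a+h\<le>p" "b+h\<le>q" by (auto simp: fields)
      have "e \<in> set (rword q (a+h))" unfolding set_rword fields
        using h by (intro exI[of _ h] exI[of _ b]) auto
      moreover have "a+h \<in> set [1..<p+1]" using h by auto
      ultimately show "e \<in> set (gword p q)" unfolding gword_def by auto
    qed
  qed
  then show ?thesis by blast
qed

definition lt3 :: "nat \<times> nat \<times> nat \<Rightarrow> nat \<times> nat \<times> nat \<Rightarrow> bool" where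
  "lt3 x y = (fst x < fst y \<or> (fst x = fst y \<and> (fst (snd x) < fst (snd y) \<or>
      (fst (snd x) = fst (snd y) \<and> snd (snd x) < snd (snd y)))))"

definition RR :: "nat \<times> nat \<times> nat \<Rightarrow> nat \<times> nat \<times> nat \<Rightarrow> bool" where
  "RR x y = lt3 (fst x + snd (snd x), snd (snd x), fst (snd x)) (fst y + snd (snd y), snd (snd y), fst (snd y))"

lemma sorted_wrt_concat_map:
  assumes "sorted_wrt P xs" "\<forall>x\<in>set xs. sorted_wrt R (g x)"
    "\<forall>x\<in>set xs. \<forall>y\<in>set xs. P x y \<longrightarrow> (\<forall>u\<in>set (g x). \<forall>v\<in>set (g y). R u v)"
  shows "sorted_wrt R (concat (map g xs))"
  using assms by (induction xs) (auto simp: sorted_wrt_append)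

lemma sorted_rword: "sorted_wrt RR (rword q i)"
  unfolding rword_def
  apply (rule sorted_wrt_concat_map[where P="(<)"])
    apply (simp del: upt_Suc)
   apply (clarsimp simp del: upt_Suc simp: sorted_wrt_map)
   apply (rule sorted_wrt_mono_rel[OF _ sorted_wrt_upt])
   apply (auto simp: RR_def lt3_def simp del: upt_Suc)
  done

lemma sorted_gword: "sorted_wrt RR (gword p q)"
  unfolding gword_def
  apply (rule sorted_wrt_concat_map[where P="(<)"])
    apply (simp del: upt_Suc)
   apply (simp add: sorted_rword)
  apply (auto simp: set_rword RR_def lt3_def)
  done


definition tr :: "mat \<Rightarrow> mat" where "tr X = (\<lambda>i j. X j i)"
definition sw :: "nat \<times> nat \<times> nat \<Rightarrow> nat \<times> nat \<times> nat" where
  "sw e = (fst (snd e), fst e, snd (snd e))"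

lemma lmove_tr:
  assumes "1 \<le> a" "1 \<le> b"
  shows "lmove a b (tr X) = tr (lmove b a X)"
  using assms unfolding lmove_def Let_def tr_def
  by (auto simp: fun_eq_iff mult.commute add.commute)

lemma fold_tr:
  assumes "\<forall>e\<in>set es. 1 \<le> fst e \<and> 1 \<le> fst (snd e)"
  shows "fold stp es (tr X) = tr (fold stp (map sw es) X)"
  using assms
proof (induction es arbitrary: X)
  case Nil then show ?case by simp
next
  case (Cons e es)
  have "stp e (tr X) = tr (stp (sw e) X)"
    using Cons.prems by (simp add: stp_def sw_def lmove_tr)
  then show ?case using Cons by simp
qed

lemma sorted_distinct_irrefl:
  assumes "sorted_wrt R xs" "\<And>x. \<not> R x x" shows "distinct xs"
  using assms by (induction xs) auto

lemma RR_irrefl: "\<not> RR x x" by (simp add: RR_def lt3_def)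

lemma comm_cond:
  assumes "x \<in> set (gword p q)" "y \<in> set (gword p q)" "x \<noteq> y" "RR x y" "RR (sw y) (sw x)"
  shows "stp x (stp y z) = stp y (stp x z)"
proof -
  obtain a b h where x: "x = (a,b,h)" by (cases x)
  obtain a' b' h' where y: "y = (a',b',h')" by (cases y)
  have ge: "1 \<le> a" "1 \<le> b" "1 \<le> a'" "1 \<le> b'" using assms(1,2) by (auto simp: set_gword x y)
  have R1: "lt3 (a+h,h,b) (a'+h',h',b')" using assms(4) by (simp add: RR_def x y)
  have R2: "lt3 (b'+h',h',a') (b+h,h,a)" using assms(5) by (simp add: RR_def sw_def x y)
  have c: "a'+1 < a \<or> a+1 < a' \<or> b'+1<b \<or> b+1<b' \<or> (a'=a+1 \<and> b = b'+1) \<or> (a = a'+1 \<and> b'=b+1)"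
    using R1 R2 assms(3) unfolding lt3_def x y by auto
  show ?thesis unfolding x y stp_def using lmove_comm[OF ge c] by simp
qed

lemma TS: "gRSK q p (tr X) = tr (gRSK p q X)"
proof -
  have ge: "\<forall>e\<in>set (gword q p). 1 \<le> fst e \<and> 1 \<le> fst (snd e)" by (auto simp: set_gword)
  have "fold stp (gword p q) X = fold stp (map sw (gword q p)) X"
  proof (rule trace_fold[where R=RR and Q="\<lambda>x y. RR (sw x) (sw y)"])
    show "sorted_wrt RR (gword p q)" by (rule sorted_gword)
    have sws: "\<And>e. sw (sw e) = e" by (simp add: sw_def)
    show "sorted_wrt (\<lambda>x y. RR (sw x) (sw y)) (map sw (gword q p))"
      by (simp add: sorted_wrt_map sws sorted_gword)
    show "set (gword p q) = set (map sw (gword q p))"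
      by (auto simp: set_gword sw_def image_iff)
    show "distinct (gword p q)" by (rule sorted_distinct_irrefl[OF sorted_gword RR_irrefl])
    show "distinct (map sw (gword q p))"
      by (rule sorted_distinct_irrefl[OF \<open>sorted_wrt (\<lambda>x y. RR (sw x) (sw y)) (map sw (gword q p))\<close>])
         (rule RR_irrefl)
    show "\<And>x y z. x \<in> set (gword p q) \<Longrightarrow> y \<in> set (gword p q) \<Longrightarrow> x \<noteq> y \<Longrightarrow> RR x y \<Longrightarrow> RR (sw y) (sw x) \<Longrightarrow> stp x (stp y z) = stp y (stp x z)"
      by (rule comm_cond)
  qed
  then show ?thesis using fold_tr[OF ge] by (simp add: gRSK_word)
qed


definition inbox :: "nat \<Rightarrow> nat \<Rightarrow> nat \<times> nat \<times> nat \<Rightarrow> bool" where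
  "inbox P Q e = (1 \<le> fst e \<and> fst e \<le> P \<and> 1 \<le> fst (snd e) \<and> fst (snd e) \<le> Q)"

definition agree :: "nat \<Rightarrow> nat \<Rightarrow> mat \<Rightarrow> mat \<Rightarrow> bool" where
  "agree P Q X Y = (\<forall>i j. 1 \<le> i \<longrightarrow> i \<le> P \<longrightarrow> 1 \<le> j \<longrightarrow> j \<le> Q \<longrightarrow> X i j = Y i j)"

definition posbox :: "nat \<Rightarrow> nat \<Rightarrow> mat \<Rightarrow> bool" where
  "posbox P Q X = (\<forall>i j. 1 \<le> i \<longrightarrow> i \<le> P \<longrightarrow> 1 \<le> j \<longrightarrow> j \<le> Q \<longrightarrow> X i j > 0)"

lemma lmove_local:
  assumes "agree P Q X Y" "1 \<le> a" "a \<le> P" "1 \<le> b" "b \<le> Q"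
  shows "agree P Q (lmove a b X) (lmove a b Y)"
proof -
  have e: "X u v = Y u v" if "1 \<le> u" "u \<le> P" "1 \<le> v" "v \<le> Q" for u v
    using assms(1) that unfolding agree_def by auto
  show ?thesis
    unfolding agree_def lmove_def Let_def using assms(2-5)
    by (auto simp: e)
qed

lemma fold_local:
  assumes "\<forall>e\<in>set es. inbox P Q e" "agree P Q X Y"
  shows "agree P Q (fold stp es X) (fold stp es Y)"
  using assms
proof (induction es arbitrary: X Y)
  case Nil then show ?case by simp
next
  case (Cons e es)
  have "agree P Q (stp e X) (stp e Y)"
    unfolding stp_def using Cons.prems by (intro lmove_local) (auto simp: inbox_def)
  then show ?case using Cons by simp
qed

lemma lmove_pos:
  assumes "posbox P Q X" "1 \<le> a" "a \<le> P" "1 \<le> b" "b \<le> Q"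
  shows "posbox P Q (lmove a b X)"
proof -
  have e: "X u v > 0" if "1 \<le> u" "u \<le> P" "1 \<le> v" "v \<le> Q" for u v
    using assms(1) that unfolding posbox_def by auto
  show ?thesis
  proof (unfold posbox_def, intro allI impI)
    fix i j assume ij: "1 \<le> i" "i \<le> P" "1 \<le> j" "j \<le> Q"
    have x1: "X a b > 0" using e assms by auto
    have x2: "X (a-1) b > 0" if "a \<ge> 2" using e assms that by auto
    have x3: "X a (b-1) > 0" if "b \<ge> 2" using e assms that by auto
    have x4: "X (a-1) (b-1) > 0" if "a \<ge> 2" "b \<ge> 2" using e assms that by auto
    have x5: "X (a-1) 1 > 0" if "a \<ge> 2" using e assms that by auto
    have x6: "X 1 (b-1) > 0" if "b \<ge> 2" using e assms that by auto
    show "lmove a b X i j > 0"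
    proof (cases "(i=a \<and> j=b) \<or> (i=a-1 \<and> j=b-1)")
      case False then show ?thesis using lmove_other[of i a j b X] e[OF ij] by auto
    next
      case T: True
      consider "a=1" "b=1" | "a=1" "b\<ge>2" | "a\<ge>2" "b=1" | "a\<ge>2" "b\<ge>2" using assms by linarith
      then show ?thesis
      proof cases
        case 1 then show ?thesis using e[OF ij] lmove_11[of X] by simp
      next
        case 2 then have "i=1" "j=b" using T ij by auto
        then show ?thesis using 2 lmove_row1[of b X] x1 x6 by simp
      next
        case 3 then have "i=a" "j=1" using T ij by auto
        then show ?thesis using 3 lmove_col1[of a X] x1 x5 by simp
      next
        case 4
        from T show ?thesis
        proof
          assume "i=a \<and> j=b" then show ?thesis using 4 lmove_gen2[of a b X] x1 x2 x3 by simp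
        next
          assume "i=a-1 \<and> j=b-1" then show ?thesis using 4 lmove_gen1[of a b X] x1 x2 x3 x4
            by (simp add: divide_pos_pos add_pos_pos)
        qed
      qed
    qed
  qed
qed

lemma fold_pos:
  assumes "\<forall>e\<in>set es. inbox P Q e" "posbox P Q X"
  shows "posbox P Q (fold stp es X)"
  using assms
proof (induction es arbitrary: X)
  case Nil then show ?case by simp
next
  case (Cons e es)
  have "posbox P Q (stp e X)"
    unfolding stp_def using Cons.prems by (intro lmove_pos) (auto simp: inbox_def)
  then show ?case using Cons by simp
qed

lemma fold_untouched:
  assumes "\<forall>e\<in>set es. \<not>(i = fst e \<and> j = fst (snd e)) \<and> \<not>(i = fst e - 1 \<and> j = fst (snd e) - 1)"
  shows "fold stp es X i j = X i j"
  using assms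
proof (induction es arbitrary: X)
  case Nil then show ?case by simp
next
  case (Cons e es)
  have "fold stp (e # es) X i j = stp e X i j" using Cons by simp
  also have "\<dots> = X i j" unfolding stp_def using Cons.prems by (intro lmove_other) auto
  finally show ?case .
qed

lemma gword_inbox: "\<forall>e\<in>set (gword p q). inbox p q e"
  by (auto simp: set_gword inbox_def)

lemma rword_inbox: "i \<le> P \<Longrightarrow> \<forall>e\<in>set (rword q i). inbox P q e"
  by (auto simp: set_rword inbox_def)

lemma gword_Suc: "gword (Suc p) q = gword p q @ rword q (Suc p)"
  unfolding gword_def by simp

lemma gRSK_Suc: "gRSK (Suc p) q X = Rmap N q (Suc p) (gRSK p q X)"
  by (simp add: gRSK_word Rmap_word gword_Suc)

lemma gRSK_row_out: "p < i \<Longrightarrow> gRSK p q X i j = X i j"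
  unfolding gRSK_word by (rule fold_untouched) (auto simp: set_gword)


lemma pimove_other:
  assumes "x \<noteq> a \<or> y > j \<or> y = 0" "x \<noteq> a - 1 \<or> y \<ge> j"
  shows "pimove a j X x y = X x y"
  using assms
proof (induction j)
  case 0 then show ?case by simp
next
  case (Suc j)
  have "pimove a (Suc j) X x y = lmove a (Suc j) (pimove a j X) x y" by simp
  also have "\<dots> = pimove a j X x y" using Suc.prems by (intro lmove_other) auto
  also have "\<dots> = X x y" using Suc.prems by (intro Suc.IH) auto
  finally show ?case .
qed

definition Yseq :: "nat \<Rightarrow> mat \<Rightarrow> nat \<Rightarrow> mat" where
  "Yseq n M r = fold (\<lambda>k. pimove (n-k) (n-k)) [0..<n-r] M"

lemma Yseq_n: "Yseq n M n = M" by (simp add: Yseq_def)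

lemma Yseq_step:
  assumes "1 \<le> r" "r \<le> n"
  shows "Yseq n M (r-1) = pimove r r (Yseq n M r)"
proof -
  have "n - (r-1) = Suc (n - r)" using assms by simp
  moreover have "n - (n - r) = r" using assms by simp
  ultimately show ?thesis by (simp add: Yseq_def)
qed

lemma Yseq_0: "Yseq n M 0 = Rmap N n n M"
  by (simp add: Yseq_def Rmap_def)

lemma Yseq_low:
  assumes "x < r" "r \<le> n"
  shows "Yseq n M r x y = M x y"
proof -
  have "\<forall>r. n - r = d \<longrightarrow> r \<le> n \<longrightarrow> x < r \<longrightarrow> Yseq n M r x y = M x y" for d
  proof (induction d)
    case 0 then show ?case by (auto simp: Yseq_n)
  next
    case (Suc d)
    show ?case
    proof (intro allI impI)
      fix r assume h: "n - r = Suc d" "r \<le> n" "x < r"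
      have "Yseq n M r = pimove (r+1) (r+1) (Yseq n M (r+1))"
        using Yseq_step[of "r+1" n M] h by simp
      moreover have "pimove (r+1) (r+1) (Yseq n M (r+1)) x y = Yseq n M (r+1) x y"
        by (rule pimove_other) (use h in auto)
      ultimately have "Yseq n M r x y = Yseq n M (r+1) x y" by simp
      also have "\<dots> = M x y" using Suc.IH h by auto
      finally show "Yseq n M r x y = M x y" .
    qed
  qed
  then show ?thesis using assms by blast
qed

lemma Yseq_high:
  assumes "s < x" "s \<le> n"
  shows "Yseq n M 0 x y = Yseq n M s x y"
  using assms
proof (induction s)
  case 0 then show ?case by simp
next
  case (Suc s)
  have "Yseq n M s = pimove (Suc s) (Suc s) (Yseq n M (Suc s))"
    using Yseq_step[of "Suc s" n M] Suc.prems by simp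
  moreover have "pimove (Suc s) (Suc s) (Yseq n M (Suc s)) x y = Yseq n M (Suc s) x y"
    by (rule pimove_other) (use Suc.prems in auto)
  ultimately have "Yseq n M s x y = Yseq n M (Suc s) x y" by simp
  then show ?case using Suc by simp
qed

lemma pimove_last: "1 \<le> r \<Longrightarrow> pimove r r Z = lmove r r (pimove r (r-1) Z)"
  by (cases r) auto

lemma Yseq_diag:
  fixes n r :: nat and M :: mat
  assumes "2 \<le> r" "r \<le> n"
  defines "Z \<equiv> pimove r (r-1) (Yseq n M r)"
  shows "Yseq n M (r-1) (r-1) (r-1) = M (r-1) r * Z r (r-1) / (M (r-1) (r-1) * M (r-1) r + M (r-1) (r-1) * Z r (r-1))"
    and "Yseq n M (r-1) r r = Yseq n M r r r * (M (r-1) r + Z r (r-1))"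
    and "Yseq n M 0 r (r-1) = Z r (r-1)"
proof -
  have Y: "Yseq n M (r-1) = lmove r r Z" unfolding Z_def
    using Yseq_step[of r n M] assms pimove_last[of r] by simp
  have z1: "Z (r-1) r = M (r-1) r" unfolding Z_def using assms
    by (simp add: pimove_other Yseq_low)
  have z2: "Z (r-1) (r-1) = M (r-1) (r-1)" unfolding Z_def using assms
    by (simp add: pimove_other Yseq_low)
  have z3: "Z r r = Yseq n M r r r" unfolding Z_def using assms
    by (simp add: pimove_other)
  show "Yseq n M (r-1) (r-1) (r-1) = M (r-1) r * Z r (r-1) / (M (r-1) (r-1) * M (r-1) r + M (r-1) (r-1) * Z r (r-1))"
    using Y lmove_gen1[of r r Z] assms z1 z2 by simp
  show "Yseq n M (r-1) r r = Yseq n M r r r * (M (r-1) r + Z r (r-1))"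
    using Y lmove_gen2[of r r Z] assms z1 z3 by simp
  have "Yseq n M 0 r (r-1) = Yseq n M (r-1) r (r-1)" using assms by (intro Yseq_high) auto
  also have "\<dots> = Z r (r-1)" using Y assms by (simp add: lmove_other)
  finally show "Yseq n M 0 r (r-1) = Z r (r-1)" .
qed


lemma partA:
  fixes n :: nat and W A S M t :: mat
  assumes n2: "2 \<le> n"
    and pos: "\<And>i j. 1 \<le> i \<Longrightarrow> i \<le> n \<Longrightarrow> 1 \<le> j \<Longrightarrow> j \<le> n \<Longrightarrow> W i j > 0"
    and sym: "\<And>i j. 1 \<le> i \<Longrightarrow> i \<le> n \<Longrightarrow> 1 \<le> j \<Longrightarrow> j \<le> n \<Longrightarrow> W i j = W j i"
    and A_def: "A = (\<lambda>i j. if i < n then gRSK (n-1) (n-1) W i j else W j n)"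
    and S_def: "S = (\<lambda>i j. Rmap n (n-1) n A j i)"
    and M_def: "M = (\<lambda>i j. if i < n then S i j else W j n)"
    and t_def: "t = gRSK n n W"
  shows "\<forall>i\<in>{1..n}. \<forall>j\<in>{1..n}. t i j = Rmap n n n M i j"
    and "\<forall>i j. 1 \<le> i \<and> i < j \<and> j \<le> n \<longrightarrow> t i j = S i j"
    and "t 1 1 = S 1 2 / (2 * S 1 1)"
    and "\<forall>i. 2 \<le> i \<and> i \<le> n-1 \<longrightarrow> t i i = S i (i+1) * S (i-1) i / S i i"
    and "t n n = 2 * S (n-1) n * W n n"
    and "\<forall>i j. 1 \<le> i \<longrightarrow> i \<le> n-1 \<longrightarrow> 1 \<le> j \<longrightarrow> j \<le> n \<longrightarrow> S i j > 0"
    and "\<forall>k. 1 \<le> k \<longrightarrow> k \<le> n-1 \<longrightarrow> S k k = gRSK (n-1) (n-1) W k k"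
proof -
  obtain p where np: "n = Suc p" and p1: "1 \<le> p" using n2 by (cases n) auto
  define u where "u = gRSK (n-1) (n-1) W"
  define RA where "RA = Rmap n (n-1) n A"
  have trW: "agree n n (tr W) W" unfolding agree_def tr_def using sym by auto
  have trW': "agree (n-1) (n-1) (tr W) W" unfolding agree_def tr_def using sym by auto
  have posW': "posbox (n-1) (n-1) W" unfolding posbox_def using pos by auto
  have posu: "posbox (n-1) (n-1) u" unfolding u_def gRSK_word
    by (rule fold_pos[OF gword_inbox posW'])
  have posA: "posbox n (n-1) A" unfolding posbox_def A_def
    using posu pos unfolding posbox_def u_def by auto
  have posRA: "posbox n (n-1) RA" unfolding RA_def Rmap_word
    by (rule fold_pos[OF rword_inbox posA]) simp
  show Spos: "\<forall>i j. 1 \<le> i \<longrightarrow> i \<le> n-1 \<longrightarrow> 1 \<le> j \<longrightarrow> j \<le> n \<longrightarrow> S i j > 0"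
    using posRA unfolding posbox_def S_def RA_def by auto
  show "\<forall>k. 1 \<le> k \<longrightarrow> k \<le> n-1 \<longrightarrow> S k k = gRSK (n-1) (n-1) W k k"
  proof (intro allI impI)
    fix k assume k: "1 \<le> k" "k \<le> n-1"
    have "S k k = fold stp (rword (n-1) n) A k k" by (simp add: S_def Rmap_word)
    also have "\<dots> = A k k" by (rule fold_untouched) (auto simp: set_rword)
    also have "\<dots> = gRSK (n-1) (n-1) W k k" using k A_def by auto
    finally show "S k k = gRSK (n-1) (n-1) W k k" .
  qed
  have key: "agree n n (gRSK (n-1) n W) M"
  proof (unfold agree_def, intro allI impI)
    fix i j assume ij: "1 \<le> i" "i \<le> n" "1 \<le> j" "j \<le> n"
    show "gRSK (n-1) n W i j = M i j"
    proof (cases "i < n")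
      case True
      have "gRSK (n-1) n W i j = tr (gRSK (n-1) n W) j i" by (simp add: tr_def)
      also have "\<dots> = gRSK n (n-1) (tr W) j i" by (simp add: TS)
      also have "gRSK n (n-1) (tr W) = Rmap n (n-1) n (gRSK (n-1) (n-1) (tr W))"
        using gRSK_Suc[of p "n-1" "tr W" n] np by simp
      also have "agree n (n-1) (gRSK (n-1) (n-1) (tr W)) A"
      proof (unfold agree_def, intro allI impI)
        fix i' j' assume h: "1 \<le> i'" "i' \<le> n" "1 \<le> j'" "j' \<le> n-1"
        show "gRSK (n-1) (n-1) (tr W) i' j' = A i' j'"
        proof (cases "i' < n")
          case True
          have "agree (n-1) (n-1) (gRSK (n-1) (n-1) (tr W)) (gRSK (n-1) (n-1) W)"
            unfolding gRSK_word by (rule fold_local[OF gword_inbox trW'])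
          then show ?thesis using h True unfolding agree_def A_def by auto
        next
          case False
          then have "i' = n" using h by simp
          then show ?thesis using gRSK_row_out[of "n-1" n "n-1" "tr W" j'] n2
            by (simp add: A_def tr_def)
        qed
      qed
      then have "agree n (n-1) (Rmap n (n-1) n (gRSK (n-1) (n-1) (tr W))) RA"
        unfolding RA_def Rmap_word by (rule fold_local[OF rword_inbox, rotated]) simp
      then have "Rmap n (n-1) n (gRSK (n-1) (n-1) (tr W)) j i = RA j i"
        using ij True unfolding agree_def by auto
      also have "\<dots> = M i j" using True by (simp add: M_def S_def RA_def)
      finally show ?thesis .
    next
      case False
      then have "i = n" using ij by simp
      then show ?thesis using gRSK_row_out[of "n-1" n n W j] n2 sym[of j n] ij
        by (simp add: M_def)
    qed
  qed
  have tR: "t = Rmap n n n (gRSK (n-1) n W)"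
    using gRSK_Suc[of p n W n] np t_def by simp
  have A1: "agree n n t (Rmap n n n M)"
    unfolding tR Rmap_word by (rule fold_local[OF rword_inbox key]) simp
  show "\<forall>i\<in>{1..n}. \<forall>j\<in>{1..n}. t i j = Rmap n n n M i j"
    using A1 unfolding agree_def by auto
  have tsym: "t i j = t j i" if "1 \<le> i" "i \<le> n" "1 \<le> j" "j \<le> n" for i j
  proof -
    have "t j i = tr t i j" by (simp add: tr_def)
    also have "\<dots> = gRSK n n (tr W) i j" by (simp add: TS t_def)
    also have "\<dots> = t i j"
      using fold_local[OF gword_inbox trW] that unfolding agree_def t_def gRSK_word by auto
    finally show ?thesis by simp
  qed
  have up: "t i j = S i j" if "1 \<le> i" "i < j" "j \<le> n" for i j
  proof -
    have "t i j = Rmap n n n M i j" using A1 that unfolding agree_def by auto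
    also have "\<dots> = M i j" unfolding Rmap_word
      by (rule fold_untouched) (use that in \<open>auto simp: set_rword\<close>)
    also have "\<dots> = S i j" using that by (simp add: M_def)
    finally show ?thesis .
  qed
  show "\<forall>i j. 1 \<le> i \<and> i < j \<and> j \<le> n \<longrightarrow> t i j = S i j" using up by auto
  define Y where "Y = Yseq n M"
  have tY: "t i j = Y 0 i j" if "1 \<le> i" "i \<le> n" "1 \<le> j" "j \<le> n" for i j
    using A1 that unfolding agree_def Y_def Yseq_0[of n M n] by auto
  have D: "Y (r-1) (r-1) (r-1) = S (r-1) r / (2 * S (r-1) (r-1)) \<and>
           Y (r-1) r r = Y r r r * (2 * S (r-1) r)" if r: "2 \<le> r" "r \<le> n" for r
  proof -
    define Z where "Z = pimove r (r-1) (Yseq n M r)"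
    have e: "Z r (r-1) = S (r-1) r"
    proof -
      have "Z r (r-1) = Y 0 r (r-1)" using Yseq_diag(3)[OF r, of M] unfolding Z_def Y_def by simp
      also have "\<dots> = t r (r-1)" using tY[of r "r-1"] r by simp
      also have "\<dots> = t (r-1) r" using tsym[of r "r-1"] r by simp
      also have "\<dots> = S (r-1) r" using up[of "r-1" r] r by simp
      finally show ?thesis .
    qed
    have m1: "M (r-1) r = S (r-1) r" "M (r-1) (r-1) = S (r-1) (r-1)" using r by (auto simp: M_def)
    have pe: "S (r-1) r > 0" "S (r-1) (r-1) > 0" using Spos r by auto
    have "Y (r-1) (r-1) (r-1) = S (r-1) r * S (r-1) r / (S (r-1) (r-1) * S (r-1) r + S (r-1) (r-1) * S (r-1) r)"
      using Yseq_diag(1)[OF r, of M] e m1 unfolding Z_def Y_def by simp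
    also have "\<dots> = S (r-1) r / (2 * S (r-1) (r-1))" using pe by (simp add: field_simps)
    finally have 1: "Y (r-1) (r-1) (r-1) = S (r-1) r / (2 * S (r-1) (r-1))" .
    have "Y (r-1) r r = Y r r r * (S (r-1) r + S (r-1) r)"
      using Yseq_diag(2)[OF r, of M] e m1 unfolding Z_def Y_def by simp
    then show ?thesis using 1 by simp
  qed
  have tdiag: "t r r = Y (r-1) r r" if "1 \<le> r" "r \<le> n" for r
  proof -
    have "t r r = Y 0 r r" using tY that by simp
    also have "\<dots> = Y (r-1) r r" unfolding Y_def using that by (intro Yseq_high) auto
    finally show ?thesis .
  qed
  have Y01: "Y 0 = Y 1"
    using Yseq_step[of 1 n M] n2 pimove_last[of 1] lmove_11 unfolding Y_def by simp
  show "t 1 1 = S 1 2 / (2 * S 1 1)"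
    using tY[of 1 1] n2 Y01 D[of 2] by simp
  show "\<forall>i. 2 \<le> i \<and> i \<le> n-1 \<longrightarrow> t i i = S i (i+1) * S (i-1) i / S i i"
  proof (intro allI impI)
    fix i assume i: "2 \<le> i \<and> i \<le> n-1"
    have iin: "i \<le> n" "1 \<le> i" "i+1 \<le> n" using i by auto
    have "t i i = Y i i i * (2 * S (i-1) i)" using tdiag[OF iin(2,1)] D[of i] i iin by simp
    also have "Y i i i = S i (i+1) / (2 * S i i)" using D[of "i+1"] i iin by simp
    finally show "t i i = S i (i+1) * S (i-1) i / S i i" by simp
  qed
  show "t n n = 2 * S (n-1) n * W n n"
    using tdiag[of n] D[of n] n2 Yseq_n[of n M] unfolding Y_def by (simp add: M_def)
qed


fun Qalt :: "mat \<Rightarrow> nat \<Rightarrow> real" where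
  "Qalt t 0 = 1"
| "Qalt t (Suc k) = t (Suc k) (Suc k) / Qalt t k"

lemma P_eq_Q:
  "(\<Prod>j<(n+1) div 2. t (n - 2*j) (n - 2*j)) / (\<Prod>j<n div 2. t (n - 1 - 2*j) (n - 1 - 2*j)) = Qalt t n"
proof (induction n)
  case 0 then show ?case by simp
next
  case (Suc n)
  have e1: "(Suc n + 1) div 2 = Suc (n div 2)" by simp
  have "(\<Prod>j<(Suc n+1) div 2. t (Suc n - 2*j) (Suc n - 2*j))
        = t (Suc n) (Suc n) * (\<Prod>j<n div 2. t (Suc n - 2*Suc j) (Suc n - 2*Suc j))"
    unfolding e1 prod.lessThan_Suc_shift by simp
  also have "(\<Prod>j<n div 2. t (Suc n - 2*Suc j) (Suc n - 2*Suc j)) = (\<Prod>j<n div 2. t (n - 1 - 2*j) (n - 1 - 2*j))"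
    by (rule prod.cong) auto
  finally have N: "(\<Prod>j<(Suc n+1) div 2. t (Suc n - 2*j) (Suc n - 2*j)) = t (Suc n) (Suc n) * (\<Prod>j<n div 2. t (n - 1 - 2*j) (n - 1 - 2*j))" .
  have D: "(\<Prod>j<Suc n div 2. t (Suc n - 1 - 2*j) (Suc n - 1 - 2*j)) = (\<Prod>j<(n+1) div 2. t (n - 2*j) (n - 2*j))"
    by simp
  show ?case unfolding N D Qalt.simps Suc.IH[symmetric] by simp
qed

lemma Qalt_cong: "(\<And>i. 1 \<le> i \<Longrightarrow> i \<le> k \<Longrightarrow> f i i = g i i) \<Longrightarrow> Qalt f k = Qalt g k"
  by (induction k) auto

lemma Qalt_pos: "(\<And>i. 1 \<le> i \<Longrightarrow> i \<le> k \<Longrightarrow> f i i > 0) \<Longrightarrow> Qalt f k > 0"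
  by (induction k) auto

lemma partB:
  "1 \<le> n \<Longrightarrow> (\<And>i j. 1 \<le> i \<Longrightarrow> i \<le> n \<Longrightarrow> 1 \<le> j \<Longrightarrow> j \<le> n \<Longrightarrow> W i j > 0)
   \<Longrightarrow> (\<And>i j. 1 \<le> i \<Longrightarrow> i \<le> n \<Longrightarrow> 1 \<le> j \<Longrightarrow> j \<le> n \<Longrightarrow> W i j = W j i)
   \<Longrightarrow> 4 ^ (n div 2) * (\<Prod>i=1..n. W i i) = Qalt (gRSK n n W) n"
proof (induction n arbitrary: W)
  case 0 then show ?case by simp
next
  case (Suc p)
  note pos = Suc.prems(2) and sym = Suc.prems(3)
  show ?case
  proof (cases "p = 0")
    case True
    have "gRSK 1 1 W = W" using lmove_11[of W] by (simp add: gRSK_def Rmap_def)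
    then show ?thesis using True by simp
  next
    case False
    define n where "n = Suc p"
    have n2: "2 \<le> n" using False n_def by simp
    define A where "A = (\<lambda>i j. if i < n then gRSK (n-1) (n-1) W i j else W j n)"
    define S where "S = (\<lambda>i j. Rmap n (n-1) n A j i)"
    define M where "M = (\<lambda>i j. if i < n then S i j else W j n)"
    define t where "t = gRSK n n W"
    define u where "u = gRSK (n-1) (n-1) W"
    note PA = partA[OF n2 pos[unfolded n_def[symmetric]] sym[unfolded n_def[symmetric]] A_def S_def M_def t_def]
    have Spos: "\<And>i j. 1 \<le> i \<Longrightarrow> i \<le> n-1 \<Longrightarrow> 1 \<le> j \<Longrightarrow> j \<le> n \<Longrightarrow> S i j > 0" using PA(6) by auto
    have Sdiag: "\<And>k. 1 \<le> k \<Longrightarrow> k \<le> n-1 \<Longrightarrow> S k k = u k k" using PA(7) u_def by auto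
    define c where "c = (\<lambda>k::nat. if odd k then (1/2::real) else 2)"
    have QS: "Qalt t k = S k (k+1) * c k / Qalt S k" if "1 \<le> k" "k \<le> n-1" for k
      using that
    proof (induction k)
      case 0 then show ?case by simp
    next
      case (Suc k)
      show ?case
      proof (cases "k = 0")
        case True
        then show ?thesis using PA(3) by (simp add: c_def numeral_2_eq_2)
      next
        case False
        have IH: "Qalt t k = S k (k+1) * c k / Qalt S k" using Suc False by simp
        have tk: "t (Suc k) (Suc k) = S (Suc k) (Suc k + 1) * S k (Suc k) / S (Suc k) (Suc k)"
          using PA(4) Suc.prems False by auto
        have p1: "S k (Suc k) > 0" "S (Suc k) (Suc k) > 0" "S (Suc k) (Suc k + 1) > 0"
          using Spos Suc.prems False by auto
        have p2: "Qalt S k > 0" by (rule Qalt_pos) (use Spos Suc.prems in auto)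
        have cc: "c (Suc k) = 1 / c k" "c k > 0" by (auto simp: c_def)
        have "Qalt t (Suc k) = (S (Suc k) (Suc k + 1) * S k (Suc k) / S (Suc k) (Suc k)) / (S k (Suc k) * c k / Qalt S k)"
          using IH tk by simp
        also have "\<dots> = S (Suc k) (Suc k + 1) * (1 / c k) / (S (Suc k) (Suc k) / Qalt S k)"
          using p1 p2 cc by (simp add: field_simps)
        finally show ?thesis using cc by simp
      qed
    qed
    have IH: "4 ^ ((n-1) div 2) * (\<Prod>i=1..n-1. W i i) = Qalt u (n-1)"
      unfolding u_def n_def using Suc.IH[of W] pos sym False by auto
    have QSu: "Qalt S (n-1) = Qalt u (n-1)" by (rule Qalt_cong) (simp add: Sdiag)
    have "Qalt t n = t n n / Qalt t (n-1)" using n_def by simp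
    also have "\<dots> = 2 * S (n-1) n * W n n / (S (n-1) n * c (n-1) / Qalt u (n-1))"
      using PA(5) QS[of "n-1"] n2 QSu by simp
    also have "\<dots> = 2 / c (n-1) * Qalt u (n-1) * W n n"
    proof -
      have "S (n-1) n > 0" using Spos[of "n-1" n] n2 by simp
      then show ?thesis by (simp add: field_simps c_def)
    qed
    also have "\<dots> = 4 ^ (n div 2) * (\<Prod>i=1..n. W i i)"
    proof -
      have pr: "(\<Prod>i=1..n. W i i) = (\<Prod>i=1..n-1. W i i) * W n n"
        using n_def by (simp add: prod.cl_ivl_Suc)
      have "2 / c (n-1) * 4 ^ ((n-1) div 2) = (4::real) ^ (n div 2)"
      proof (cases "odd (n-1)")
        case True
        then have "n div 2 = Suc ((n-1) div 2)" using n2 by presburger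
        then show ?thesis using True by (simp add: c_def)
      next
        case False
        then have "n div 2 = (n-1) div 2" using n2 by presburger
        then show ?thesis using False by (simp add: c_def)
      qed
      then have "2 / c (n-1) * (4 ^ ((n-1) div 2) * (\<Prod>i=1..n-1. W i i)) * W n n
          = 4 ^ (n div 2) * ((\<Prod>i=1..n-1. W i i) * W n n)"
        by (metis mult.assoc)
      then show ?thesis unfolding pr IH[symmetric] .
    qed
    finally show ?thesis unfolding t_def n_def by simp
  qed
qed


lemma odd_reindex:
  "(\<Prod>j<(n+1) div 2. gRSK n n W (n - 2*j) (n - 2*j)) = (\<Prod>i\<in>{i\<in>{1..n}. odd i}. zshape n W i)"
  by (rule prod.reindex_bij_witness[where i="\<lambda>i. (i-1) div 2" and j="\<lambda>j. 2*j+1"])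
     (auto simp: zshape_def Suc_diff_Suc elim!: oddE)

lemma even_reindex:
  "(\<Prod>j<n div 2. gRSK n n W (n - 1 - 2*j) (n - 1 - 2*j)) = (\<Prod>i\<in>{i\<in>{1..n}. even i}. zshape n W i)"
  by (rule prod.reindex_bij_witness[where i="\<lambda>i. (i-2) div 2" and j="\<lambda>j. 2*j+2"])
     (auto simp: zshape_def Suc_diff_Suc elim!: evenE)

theorem lemma5p1:
  fixes n :: nat and W :: mat
  assumes n1: "1 \<le> n"
    and pos: "\<And>i j. 1 \<le> i \<Longrightarrow> i \<le> n \<Longrightarrow> 1 \<le> j \<Longrightarrow> j \<le> n \<Longrightarrow> W i j > 0"
    and sym: "\<And>i j. 1 \<le> i \<Longrightarrow> i \<le> n \<Longrightarrow> 1 \<le> j \<Longrightarrow> j \<le> n \<Longrightarrow> W i j = W j i"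
  shows
    "(2 \<le> n \<longrightarrow>
      (let A = (\<lambda>i j. if i < n then gRSK (n-1) (n-1) W i j else W j n);
           S = (\<lambda>i j. Rmap n (n-1) n A j i);
           M = (\<lambda>i j. if i < n then S i j else W j n);
           t = gRSK n n W
       in (\<forall>i\<in>{1..n}. \<forall>j\<in>{1..n}. t i j = Rmap n n n M i j)
        \<and> (\<forall>i j. 1 \<le> i \<and> i < j \<and> j \<le> n \<longrightarrow> t i j = S i j)
        \<and> t 1 1 = S 1 2 / (2 * S 1 1)
        \<and> (\<forall>i. 2 \<le> i \<and> i \<le> n-1 \<longrightarrow> t i i = S i (i+1) * S (i-1) i / S i i)
        \<and> t n n = 2 * S (n-1) n * W n n))
     \<and> (let t = gRSK n n W in
          4 ^ (n div 2) * (\<Prod>i=1..n. W i i)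
            = (\<Prod>j<(n+1) div 2. t (n - 2*j) (n - 2*j))
              / (\<Prod>j<n div 2. t (n - 1 - 2*j) (n - 1 - 2*j))
        \<and> (\<Prod>j<(n+1) div 2. t (n - 2*j) (n - 2*j))
              / (\<Prod>j<n div 2. t (n - 1 - 2*j) (n - 1 - 2*j))
            = (\<Prod>i\<in>{i\<in>{1..n}. odd i}. zshape n W i)
              / (\<Prod>i\<in>{i\<in>{1..n}. even i}. zshape n W i))"
  apply (rule conjI)
   apply (rule impI)
  subgoal premises n2
    unfolding Let_def using partA[where W=W, OF n2 pos sym refl refl refl refl] by blast
  subgoal
    unfolding Let_def P_eq_Q odd_reindex[symmetric] even_reindex[symmetric]
    using partB[where W=W, OF n1 pos sym] by simp
  done

end
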